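(* Fix an index $k\ge 0$ and approximations $x_1^{[k]},\dots,x_m^{[k]}\in(a,b)$. For each $i=1,\dots,m$ assume that the iteration $$x_i^{[k+1]} = x_i^{[k]} - \alpha_i f(x_i^{[k]})\Big[f'(x_i^{[k]}) - f(x_i^{[k]})\,Q_i'(x_i^{[k]})\big[(\alpha_i+1)Q_i(x_i^{[k]})\big]^{-1}\Big]^{-1}\qquad(\ast)$$ is well defined, i.e. $Q_i(x_i^{[k]})\neq 0$ and the bracket being inverted is nonzero. Suppose there are real numbers $A_{is},B_{is}$ ($i,s=1,\dots,m$) such that for every $i$ $$\Phi_i^{(\alpha_i+1)}(x_i)=\sum_{s=1}^m A_{is}\,(x_s^{[k]}-x_s),\qquad \Psi_i^{(\alpha_i-1)}(x_i)=(\alpha_i+1)\big[f^{(\alpha_i)}(x_i)\big]^2+\sum_{s=1}^m B_{is}\,(x_s^{[k]}-x_s).$$ Let $A,B,M,K,P$ be constants with $|A_{is}|\le A$ and $|B_{is}|\le B$ for all $i,s$; $|\Phi_i^{(\alpha_i+2)}(x)|\le M$ and $|\Psi_i^{(\alpha_i)}(x)|\le K$ for all $i$ and all $x$ in the closed interval with endpoints $x_i$ and $x_i^{[k]}$; and $0<P\le |f^{(\alpha_i)}(x_i)|$ for all $i$. Let $c>0$ and $0<q<1$ be real numbers such that for every $i=1,\dots,m$ $$c^2\Big[mA+\frac{M}{\alpha_i+2}\Big] < (\alpha_i+1)^2\alpha_i P^2 - c(\alpha_i+1)\big[\alpha_i B m+K\big].$$ If $|x_i^{[k]}-x_i|<c\,q^{3^k}$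 for all $i=1,\dots,m$, then $|x_i^{[k+1]}-x_i|<c\,q^{3^{k+1}}$ for all $i=1,\dots,m$. (In particular, the method $(\ast)$ has third order of convergence.)
   Context: Let $(a,b)$ be a real interval and let $\varphi_0,\dots,\varphi_n$ be infinitely differentiable real functions on $(a,b)$ forming a Chebyshev system there. Let $\alpha_1,\dots,\alpha_m$ be positive integers with $\sum_{j=1}^m\alpha_j=n$. For $x,y_1,\dots,y_m\in(a,b)$ let $D(x;y_1,\dots,y_m)$ denote the determinant of the $(n+1)\times(n+1)$ matrix whose first row is $(\varphi_0(x),\dots,\varphi_n(x))$, followed, for $j=1,\dots,m$ in order and for $r=0,1,\dots,\alpha_j-1$ in order, by the rows $(\varphi_0^{(r)}(y_j),\dots,\varphi_n^{(r)}(y_j))$. Let $x_1,\dots,x_m\in(a,b)$ be distinct and set $f(x)=D(x;x_1,\dots,x_m)$; this is a generalized polynomial $\sum_{j=0}^n a_j\varphi_j(x)$ having zeros $x_1,\dots,x_m$ of multiplicities $\alpha_1,\dots,\alpha_m$. Given approximations $x_1^{[k]},\dots,x_m^{[k]}\in(a,b)$ of these zeros, define for $i=1,\dots,m$ $$Q_i(x)=\frac{\partial^{\alpha_i}}{\partial x^{\alpha_i}}D(x;x_1^{[k]},\dots,x_m^{[k]}),$$ $$\Phi_i(x)=(\alpha_i+1)\big[(x-x_i)f'(x)-\alpha_i f(x)\big]Q_i(x)-(x-x_i)f(x)Q_i'(x),\qquad \Psi_i(x)=(\alpha_i+1)f'(x)Q_i(x)-f(x)Q_i'(x).$$ Derivatives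 of order $0$ mean the function itself. *)

theory Defs
  imports "HOL-Analysis.Derivative" "Jordan_Normal_Form.Determinant"
begin

text \<open>Indices are 0-based: functions phi 0, ..., phi n; zeros x 0, ..., x (m-1)
  with multiplicities al 0, ..., al (m-1).\<close>

definition smooth_on :: "(real \<Rightarrow> real) \<Rightarrow> real set \<Rightarrow> bool" where
  "smooth_on g S \<longleftrightarrow> (\<forall>k. \<forall>x\<in>S. ((deriv ^^ k) g has_real_derivative (deriv ^^ Suc k) g x) (at x))"

definition chebyshev_system :: "(nat \<Rightarrow> real \<Rightarrow> real) \<Rightarrow> nat \<Rightarrow> real set \<Rightarrow> bool" where
  "chebyshev_system phi n S \<longleftrightarrow>
     (\<forall>t. (\<forall>i\<le>n. t i \<in> S) \<and> inj_on t {..n} \<longrightarrow>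
        Determinant.det (mat (Suc n) (Suc n) (\<lambda>(r, c). phi c (t r))) \<noteq> 0)"

definition rowspec :: "(nat \<Rightarrow> nat) \<Rightarrow> nat \<Rightarrow> (nat \<times> nat) list" where
  "rowspec al m = concat (map (\<lambda>j. map (\<lambda>r. (j, r)) [0..<al j]) [0..<m])"

definition Dfun :: "(nat \<Rightarrow> real \<Rightarrow> real) \<Rightarrow> nat \<Rightarrow> nat \<Rightarrow> (nat \<Rightarrow> nat) \<Rightarrow> real \<Rightarrow> (nat \<Rightarrow> real) \<Rightarrow> real" where
  "Dfun phi n m al x ys =
     Determinant.det (mat (Suc n) (Suc n) (\<lambda>(r, c).
        if r = 0 then phi c x
        else (case rowspec al m ! (r - 1) of (j, d) \<Rightarrow> (deriv ^^ d) (phi c) (ys j))))"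

definition PhiF :: "(real \<Rightarrow> real) \<Rightarrow> (real \<Rightarrow> real) \<Rightarrow> nat \<Rightarrow> real \<Rightarrow> real \<Rightarrow> real" where
  "PhiF f Q a xi x =
     (real a + 1) * ((x - xi) * deriv f x - real a * f x) * Q x - (x - xi) * f x * deriv Q x"

definition PsiF :: "(real \<Rightarrow> real) \<Rightarrow> (real \<Rightarrow> real) \<Rightarrow> nat \<Rightarrow> real \<Rightarrow> real" where
  "PsiF f Q a x = (real a + 1) * deriv f x * Q x - f x * deriv Q x"

end

theory Submission
  imports Defs
begin


definition Dmat :: "(nat \<Rightarrow> real) \<Rightarrow> (nat \<Rightarrow> real \<Rightarrow> real) \<Rightarrow> nat \<Rightarrow> nat \<Rightarrow> (nat \<Rightarrow> nat) \<Rightarrow> (nat \<Rightarrow> real) \<Rightarrow> real mat" where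
  "Dmat v phi n m al ys = mat (Suc n) (Suc n) (\<lambda>(r, c).
        if r = 0 then v c
        else (case rowspec al m ! (r - 1) of (j, d) \<Rightarrow> (deriv ^^ d) (phi c) (ys j)))"

definition Dcof where "Dcof phi n m al ys c = cofactor (Dmat (\<lambda>_. 0) phi n m al ys) 0 c"

lemma Dfun_eq: "Dfun phi n m al x ys = det (Dmat (\<lambda>c. phi c x) phi n m al ys)"
  by (simp add: Dfun_def Dmat_def)

lemma Dmat_det: "det (Dmat v phi n m al ys) = (\<Sum>c<Suc n. v c * Dcof phi n m al ys c)"
proof -
  have car: "Dmat v phi n m al ys \<in> carrier_mat (Suc n) (Suc n)" by (simp add: Dmat_def)
  have "det (Dmat v phi n m al ys) = (\<Sum>c<Suc n. Dmat v phi n m al ys $$ (0,c) * cofactor (Dmat v phi n m al ys) 0 c)"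
    by (rule laplace_expansion_row[OF car]) simp
  also have "\<dots> = (\<Sum>c<Suc n. v c * Dcof phi n m al ys c)"
  proof (rule sum.cong[OF refl])
    fix c assume c: "c \<in> {..<Suc n}"
    have "mat_delete (Dmat v phi n m al ys) 0 c = mat_delete (Dmat (\<lambda>_. 0) phi n m al ys) 0 c"
      by (rule eq_matI) (auto simp: mat_delete_def Dmat_def)
    then show "Dmat v phi n m al ys $$ (0,c) * cofactor (Dmat v phi n m al ys) 0 c = v c * Dcof phi n m al ys c"
      using c by (simp add: Dcof_def cofactor_def Dmat_def)
  qed
  finally show ?thesis .
qed

lemma length_rowspec: "length (rowspec al m) = (\<Sum>j<m. al j)"
  by (simp add: rowspec_def length_concat o_def sum_list_sum_nth atLeast0LessThan[symmetric] sum.reindex)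

lemma Dmat_zero:
  assumes i: "i < m" and d: "d < al i" and sum: "(\<Sum>j<m. al j) = n"
  shows "det (Dmat (\<lambda>c. (deriv ^^ d) (phi c) (ys i)) phi n m al ys) = 0"
proof -
  have "(i, d) \<in> set (rowspec al m)" using i d by (auto simp: rowspec_def intro!: bexI[of _ i])
  then obtain r where r: "r < length (rowspec al m)" "rowspec al m ! r = (i, d)"
    by (auto simp: in_set_conv_nth)
  have rn: "r < n" using r(1) sum length_rowspec by simp
  show ?thesis
  proof (rule det_identical_rows[of _ "Suc n" 0 "Suc r"])
    show "Dmat (\<lambda>c. (deriv ^^ d) (phi c) (ys i)) phi n m al ys \<in> carrier_mat (Suc n) (Suc n)"
      by (simp add: Dmat_def)
    show "row (Dmat (\<lambda>c. (deriv ^^ d) (phi c) (ys i)) phi n m al ys) 0 =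
          row (Dmat (\<lambda>c. (deriv ^^ d) (phi c) (ys i)) phi n m al ys) (Suc r)"
      by (rule eq_vecI) (use rn r in \<open>auto simp: Dmat_def\<close>)
  qed (use rn in auto)
qed



lemma smooth_onD: "smooth_on g S \<Longrightarrow> x \<in> S \<Longrightarrow> ((deriv ^^ k) g has_real_derivative (deriv ^^ Suc k) g x) (at x)"
  unfolding smooth_on_def by blast

lemma smooth_onD2: "smooth_on g S \<Longrightarrow> x \<in> S \<Longrightarrow> ((deriv ^^ k) g has_real_derivative deriv ((deriv ^^ k) g) x) (at x)"
  using smooth_onD[of g S x k] by simp

lemma formula_induct:
  assumes S: "open S" and G0: "\<And>x. x \<in> S \<Longrightarrow> F x = G 0 x"
    and GD: "\<And>k x. x \<in> S \<Longrightarrow> (G k has_real_derivative G (Suc k) x) (at x)"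
  shows "\<And>x. x \<in> S \<Longrightarrow> (deriv ^^ k) F x = G k x"
proof (induction k)
  case 0 then show ?case using G0 by simp
next
  case (Suc k)
  have ev: "eventually (\<lambda>y. (deriv ^^ k) F y = G k y) (nhds x)"
    using eventually_nhds_in_open[OF S Suc.prems] by (rule eventually_mono) (use Suc.IH in auto)
  have "(deriv ^^ Suc k) F x = deriv ((deriv ^^ k) F) x" by simp
  also have "\<dots> = deriv (G k) x" by (rule deriv_cong_ev[OF ev refl])
  also have "\<dots> = G (Suc k) x" by (rule DERIV_imp_deriv[OF GD[OF Suc.prems]])
  finally show ?case .
qed

lemma formula_smooth:
  assumes S: "open S" and G0: "\<And>x. x \<in> S \<Longrightarrow> F x = G 0 x"
    and GD: "\<And>k x. x \<in> S \<Longrightarrow> (G k has_real_derivative G (Suc k) x) (at x)"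
  shows "smooth_on F S"
  unfolding smooth_on_def
proof (intro allI ballI)
  fix k x assume x: "x \<in> S"
  have fo: "\<And>k y. y \<in> S \<Longrightarrow> (deriv ^^ k) F y = G k y"
    by (rule formula_induct[where F=F and G=G and S=S]) (auto intro: G0 GD S)
  have "((deriv ^^ k) F has_real_derivative G (Suc k) x) (at x)"
    by (rule has_field_derivative_transform_within_open[OF GD[OF x] S x]) (simp add: fo)
  then show "((deriv ^^ k) F has_real_derivative (deriv ^^ Suc k) F x) (at x)"
    using fo[OF x, of "Suc k"] by simp
qed

lemma sum_Suc_reindex':
  fixes f :: "nat \<Rightarrow> 'a::ab_group_add"
  shows "sum f {0..n} = f 0 - f (Suc n) + sum (\<lambda>i. f (Suc i)) {0..n}"
  by (induct n) auto

lemma Suc_choose': "Suc n choose k = (n choose k) + (if k = 0 then 0 else (n choose (k-1)))"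
  by (cases k) simp_all

lemma leibniz_deriv:
  assumes g: "smooth_on g S" and h: "smooth_on h S" and x: "x \<in> S"
  shows "((\<lambda>x. \<Sum>i = 0..k. real (k choose i) * (deriv ^^ i) g x * (deriv ^^ (k-i)) h x) has_real_derivative
           (\<Sum>i = 0..Suc k. real (Suc k choose i) * (deriv ^^ i) g x * (deriv ^^ (Suc k-i)) h x)) (at x)"
proof -
  have *: "\<And>n. ((deriv ^^ n) g has_field_derivative deriv ((deriv ^^ n) g) x) (at x)"
          "\<And>n. ((deriv ^^ n) h has_field_derivative deriv ((deriv ^^ n) h) x) (at x)"
    using smooth_onD[OF g x] smooth_onD[OF h x] by auto
  have sumeq: "(\<Sum>i = 0..k.
               real (k choose i) * (deriv ((deriv ^^ i) g) x * (deriv ^^ (k-i)) h x + deriv ((deriv ^^ (k-i)) h) x * (deriv ^^ i) g x)) =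
            h x * deriv ((deriv ^^ k) g) x + (\<Sum>i = 0..k. (deriv ^^ i) g x * (real (Suc k choose i) * (deriv ^^ (Suc k - i)) h x))"
    apply (simp add: Suc_choose' algebra_simps sum.distrib)
    apply (subst (4) sum_Suc_reindex')
    apply (auto simp: algebra_simps Suc_diff_le intro: sum.cong)
    done
  show ?thesis
    apply (rule DERIV_cong)
     apply (rule derivative_eq_intros | simp)+
        apply (auto intro: DERIV_mult *)
    using sumeq by (simp add: sum.atLeast0_atMost_Suc algebra_simps)
qed


lemma const_formula:
  assumes S: "open S" and x: "x \<in> S"
  shows "(deriv ^^ k) (\<lambda>x. c::real) x = (if k = 0 then c else 0)"
  by (rule formula_induct[where G="\<lambda>k x. if k = 0 then c else 0", OF S _ _ x]) auto

lemma const_smooth: "open S \<Longrightarrow> smooth_on (\<lambda>x. c::real) S"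
  by (rule formula_smooth[where G="\<lambda>k x. if k = 0 then c else 0"]) auto

definition linG :: "real \<Rightarrow> nat \<Rightarrow> real \<Rightarrow> real" where
  "linG x0 k x = (case k of 0 \<Rightarrow> x - x0 | Suc 0 \<Rightarrow> 1 | Suc (Suc _) \<Rightarrow> 0)"

lemma linG_deriv: "(linG x0 k has_real_derivative linG x0 (Suc k) x) (at x)"
  unfolding linG_def
  by (cases k; cases "k - 1") (auto intro!: derivative_eq_intros)

lemma lin_formula:
  assumes S: "open S" and x: "x \<in> S"
  shows "(deriv ^^ k) (\<lambda>x. x - x0) x = linG x0 k x"
  by (rule formula_induct[where G="linG x0", OF S _ _ x]) (auto simp: linG_def[of x0 0] intro: linG_deriv)

lemma lin_smooth: "open S \<Longrightarrow> smooth_on (\<lambda>x. x - x0) S"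
  by (rule formula_smooth[where G="linG x0"]) (auto simp: linG_def[of x0 0] intro: linG_deriv)

lemma add_formula:
  assumes S: "open S" and g: "smooth_on g S" and h: "smooth_on h S" and x: "x \<in> S"
  shows "(deriv ^^ k) (\<lambda>x. g x + h x) x = (deriv ^^ k) g x + (deriv ^^ k) h x"
  by (rule formula_induct[where G="\<lambda>k x. (deriv ^^ k) g x + (deriv ^^ k) h x", OF S _ _ x])
     (auto intro!: DERIV_add smooth_onD[OF g] smooth_onD2[OF g] smooth_onD[OF h] smooth_onD2[OF h])

lemma add_smooth:
  assumes S: "open S" and g: "smooth_on g S" and h: "smooth_on h S"
  shows "smooth_on (\<lambda>x. g x + h x) S"
  by (rule formula_smooth[where G="\<lambda>k x. (deriv ^^ k) g x + (deriv ^^ k) h x", OF S])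
     (auto intro!: DERIV_add smooth_onD[OF g] smooth_onD2[OF g] smooth_onD[OF h] smooth_onD2[OF h])

lemma diff_formula:
  assumes S: "open S" and g: "smooth_on g S" and h: "smooth_on h S" and x: "x \<in> S"
  shows "(deriv ^^ k) (\<lambda>x. g x - h x) x = (deriv ^^ k) g x - (deriv ^^ k) h x"
  by (rule formula_induct[where G="\<lambda>k x. (deriv ^^ k) g x - (deriv ^^ k) h x", OF S _ _ x])
     (auto intro!: DERIV_diff smooth_onD[OF g] smooth_onD2[OF g] smooth_onD[OF h] smooth_onD2[OF h])

lemma diff_smooth:
  assumes S: "open S" and g: "smooth_on g S" and h: "smooth_on h S"
  shows "smooth_on (\<lambda>x. g x - h x) S"
  by (rule formula_smooth[where G="\<lambda>k x. (deriv ^^ k) g x - (deriv ^^ k) h x", OF S])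
     (auto intro!: DERIV_diff smooth_onD[OF g] smooth_onD2[OF g] smooth_onD[OF h] smooth_onD2[OF h])

lemma cmult_formula:
  assumes S: "open S" and g: "smooth_on g S" and x: "x \<in> S"
  shows "(deriv ^^ k) (\<lambda>x. c * g x) x = c * (deriv ^^ k) g x"
  by (rule formula_induct[where G="\<lambda>k x. c * (deriv ^^ k) g x", OF S _ _ x])
     (auto intro!: DERIV_cmult smooth_onD[OF g] smooth_onD2[OF g])

lemma cmult_smooth:
  assumes S: "open S" and g: "smooth_on g S"
  shows "smooth_on (\<lambda>x. c * g x) S"
  by (rule formula_smooth[where G="\<lambda>k x. c * (deriv ^^ k) g x", OF S])
     (auto intro!: DERIV_cmult smooth_onD[OF g] smooth_onD2[OF g])

lemma sum_formula:
  assumes S: "open S" and g: "\<And>c. c \<in> C \<Longrightarrow> smooth_on (g c) S" and x: "x \<in> S"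
  shows "(deriv ^^ k) (\<lambda>x. \<Sum>c\<in>C. g c x) x = (\<Sum>c\<in>C. (deriv ^^ k) (g c) x)"
  by (rule formula_induct[where G="\<lambda>k x. \<Sum>c\<in>C. (deriv ^^ k) (g c) x", OF S _ _ x])
     (auto intro!: DERIV_sum smooth_onD[OF g] smooth_onD2[OF g])

lemma sum_smooth:
  assumes S: "open S" and g: "\<And>c. c \<in> C \<Longrightarrow> smooth_on (g c) S"
  shows "smooth_on (\<lambda>x. \<Sum>c\<in>C. g c x) S"
  by (rule formula_smooth[where G="\<lambda>k x. \<Sum>c\<in>C. (deriv ^^ k) (g c) x", OF S])
     (auto intro!: DERIV_sum smooth_onD[OF g] smooth_onD2[OF g])

lemma mult_formula:
  assumes S: "open S" and g: "smooth_on g S" and h: "smooth_on h S" and x: "x \<in> S"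
  shows "(deriv ^^ k) (\<lambda>x. g x * h x) x = (\<Sum>i = 0..k. real (k choose i) * (deriv ^^ i) g x * (deriv ^^ (k-i)) h x)"
  by (rule formula_induct[where G="\<lambda>k x. \<Sum>i = 0..k. real (k choose i) * (deriv ^^ i) g x * (deriv ^^ (k-i)) h x", OF S _ _ x])
     (simp, erule leibniz_deriv[OF g h])

lemma mult_smooth:
  assumes S: "open S" and g: "smooth_on g S" and h: "smooth_on h S"
  shows "smooth_on (\<lambda>x. g x * h x) S"
  by (rule formula_smooth[where G="\<lambda>k x. \<Sum>i = 0..k. real (k choose i) * (deriv ^^ i) g x * (deriv ^^ (k-i)) h x", OF S])
     (simp, erule leibniz_deriv[OF g h])

lemma deriv_pow_formula: "(deriv ^^ k) ((deriv ^^ j) g) = (deriv ^^ (k + j)) g"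
  by (simp add: funpow_add)

lemma deriv_smooth:
  assumes g: "smooth_on g S"
  shows "smooth_on ((deriv ^^ j) g) S"
  using g unfolding smooth_on_def deriv_pow_formula by (metis add_Suc)

lemma deriv1_smooth: "smooth_on g S \<Longrightarrow> smooth_on (deriv g) S"
  using deriv_smooth[of g S 1] by simp


lemma Dfun_expand: "Dfun phi n m al x ys = (\<Sum>c<Suc n. Dcof phi n m al ys c * phi c x)"
  by (simp add: Dfun_eq Dmat_det mult.commute)

lemma Dfun_fun: "(\<lambda>x. Dfun phi n m al x ys) = (\<lambda>x. \<Sum>c\<in>{..<Suc n}. Dcof phi n m al ys c * phi c x)"
  by (simp add: Dfun_expand)

lemma Dfun_smooth:
  assumes S: "open S" and ph: "\<forall>j\<le>n. smooth_on (phi j) S"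
  shows "smooth_on (\<lambda>x. Dfun phi n m al x ys) S"
  unfolding Dfun_fun
  by (rule sum_smooth[OF S], rule cmult_smooth[OF S]) (use ph in auto)

lemma Dfun_deriv:
  assumes S: "open S" and ph: "\<forall>j\<le>n. smooth_on (phi j) S" and x: "x \<in> S"
  shows "(deriv ^^ d) (\<lambda>x. Dfun phi n m al x ys) x = (\<Sum>c<Suc n. Dcof phi n m al ys c * (deriv ^^ d) (phi c) x)"
proof -
  have "(deriv ^^ d) (\<lambda>x. Dfun phi n m al x ys) x = (\<Sum>c\<in>{..<Suc n}. (deriv ^^ d) (\<lambda>x. Dcof phi n m al ys c * phi c x) x)"
    unfolding Dfun_fun by (rule sum_formula[OF S _ x], rule cmult_smooth[OF S]) (use ph in auto)
  also have "\<dots> = (\<Sum>c<Suc n. Dcof phi n m al ys c * (deriv ^^ d) (phi c) x)"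
    by (rule sum.cong[OF refl], rule cmult_formula[OF S _ x]) (use ph in auto)
  finally show ?thesis .
qed

lemma Dfun_zero:
  assumes S: "open S" and ph: "\<forall>j\<le>n. smooth_on (phi j) S" and x: "ys i \<in> S"
    and i: "i < m" and d: "d < al i" and sum: "(\<Sum>j<m. al j) = n"
  shows "(deriv ^^ d) (\<lambda>x. Dfun phi n m al x ys) (ys i) = 0"
  unfolding Dfun_deriv[OF S ph x]
  using Dmat_zero[OF i d sum, of phi ys] by (simp add: Dmat_det mult.commute)

lemma lin_mult:
  assumes S: "open S" and g: "smooth_on g S" and x0: "x0 \<in> S"
  shows "(deriv ^^ l) (\<lambda>x. (x - x0) * g x) x0 = (if l = 0 then 0 else real l * (deriv ^^ (l - 1)) g x0)"
proof -
  have "(deriv ^^ l) (\<lambda>x. (x - x0) * g x) x0 = (\<Sum>i = 0..l. real (l choose i) * linG x0 i x0 * (deriv ^^ (l-i)) g x0)"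
    unfolding mult_formula[OF S lin_smooth[OF S] g x0] lin_formula[OF S x0] ..
  also have "\<dots> = (\<Sum>i = 0..l. if i = 1 then real l * (deriv ^^ (l - 1)) g x0 else 0)"
    by (rule sum.cong[OF refl]) (auto simp: linG_def split: nat.split)
  also have "\<dots> = (if l = 0 then 0 else real l * (deriv ^^ (l - 1)) g x0)"
    by (simp add: sum.delta)
  finally show ?thesis .
qed

lemma prod_zero:
  assumes S: "open S" and g: "smooth_on g S" and h: "smooth_on h S" and x0: "x0 \<in> S"
    and z: "\<And>l. l \<le> j \<Longrightarrow> (deriv ^^ l) g x0 = 0"
  shows "(deriv ^^ j) (\<lambda>x. g x * h x) x0 = 0"
  unfolding mult_formula[OF S g h x0] by (rule sum.neutral) (auto simp: z)

lemma deriv_of_deriv: "(deriv ^^ l) (deriv f) = (deriv ^^ Suc l) f"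
  using deriv_pow_formula[of l 1 f] by simp

lemma PhiF_fun: "PhiF f Q a xi = (\<lambda>x. ((real a + 1) * ((x - xi) * deriv f x - real a * f x)) * Q x - ((x - xi) * f x) * deriv Q x)"
  by (simp add: PhiF_def fun_eq_iff)

lemma PsiF_fun: "PsiF f Q a = (\<lambda>x. ((real a + 1) * deriv f x) * Q x - f x * deriv Q x)"
  by (simp add: PsiF_def fun_eq_iff)

lemma Phi_smooth:
  assumes S: "open S" and f: "smooth_on f S" and Q: "smooth_on Q S"
  shows "smooth_on (PhiF f Q a xi) S"
  unfolding PhiF_fun
  by (intro diff_smooth mult_smooth cmult_smooth lin_smooth deriv1_smooth S f Q)

lemma Psi_smooth:
  assumes S: "open S" and f: "smooth_on f S" and Q: "smooth_on Q S"
  shows "smooth_on (PsiF f Q a) S"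
  unfolding PsiF_fun
  by (intro diff_smooth mult_smooth cmult_smooth deriv1_smooth S f Q)

lemma Phi_zero:
  assumes S: "open S" and f: "smooth_on f S" and Q: "smooth_on Q S" and x0: "x0 \<in> S"
    and z: "\<And>l. l < a \<Longrightarrow> (deriv ^^ l) f x0 = 0" and j: "j \<le> a"
  shows "(deriv ^^ j) (PhiF f Q a x0) x0 = 0"
proof -
  have sf': "smooth_on (deriv f) S" by (rule deriv1_smooth[OF f])
  have sU1: "smooth_on (\<lambda>x. (x - x0) * deriv f x) S" by (intro mult_smooth lin_smooth S sf')
  have sU2: "smooth_on (\<lambda>x. real a * f x) S" by (intro cmult_smooth S f)
  have sU: "smooth_on (\<lambda>x. (real a + 1) * ((x - x0) * deriv f x - real a * f x)) S"
    by (intro cmult_smooth diff_smooth sU1 sU2 S)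
  have sW: "smooth_on (\<lambda>x. (x - x0) * f x) S" by (intro mult_smooth lin_smooth S f)
  have zU: "(deriv ^^ l) (\<lambda>x. (real a + 1) * ((x - x0) * deriv f x - real a * f x)) x0 = 0" if l: "l \<le> j" for l
  proof -
    have "(deriv ^^ l) (\<lambda>x. (real a + 1) * ((x - x0) * deriv f x - real a * f x)) x0
        = (real a + 1) * ((if l = 0 then 0 else real l * (deriv ^^ l) f x0) - real a * (deriv ^^ l) f x0)"
      unfolding cmult_formula[OF S diff_smooth[OF S sU1 sU2] x0] diff_formula[OF S sU1 sU2 x0]
        lin_mult[OF S sf' x0] cmult_formula[OF S f x0]
      by (cases l) (simp_all add: deriv_of_deriv)
    also have "\<dots> = 0"
    proof (cases "l < a")
      case True then show ?thesis using z by simp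
    next
      case False then have "l = a" using l j by simp
      then show ?thesis by simp
    qed
    finally show ?thesis .
  qed
  have zW: "(deriv ^^ l) (\<lambda>x. (x - x0) * f x) x0 = 0" if l: "l \<le> j" for l
    unfolding lin_mult[OF S f x0] using z l j by simp
  have "(deriv ^^ j) (PhiF f Q a x0) x0 =
     (deriv ^^ j) (\<lambda>x. ((real a + 1) * ((x - x0) * deriv f x - real a * f x)) * Q x) x0
     - (deriv ^^ j) (\<lambda>x. ((x - x0) * f x) * deriv Q x) x0"
    unfolding PhiF_fun
    by (rule diff_formula[OF S _ _ x0]) (intro mult_smooth S sU sW Q deriv1_smooth)+
  also have "\<dots> = 0"
    using prod_zero[OF S sU Q x0 zU] prod_zero[OF S sW deriv1_smooth[OF Q] x0 zW] by simp
  finally show ?thesis .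
qed

lemma Psi_zero:
  assumes S: "open S" and f: "smooth_on f S" and Q: "smooth_on Q S" and x0: "x0 \<in> S"
    and z: "\<And>l. l < a \<Longrightarrow> (deriv ^^ l) f x0 = 0" and j: "j < a - 1"
  shows "(deriv ^^ j) (PsiF f Q a) x0 = 0"
proof -
  have sf': "smooth_on (deriv f) S" by (rule deriv1_smooth[OF f])
  have sU: "smooth_on (\<lambda>x. (real a + 1) * deriv f x) S" by (intro cmult_smooth S sf')
  have zU: "(deriv ^^ l) (\<lambda>x. (real a + 1) * deriv f x) x0 = 0" if l: "l \<le> j" for l
    unfolding cmult_formula[OF S sf' x0] deriv_of_deriv using z[of "Suc l"] l j by simp
  have zW: "(deriv ^^ l) f x0 = 0" if l: "l \<le> j" for l
    using z l j by simp
  have "(deriv ^^ j) (PsiF f Q a) x0 =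
     (deriv ^^ j) (\<lambda>x. ((real a + 1) * deriv f x) * Q x) x0
     - (deriv ^^ j) (\<lambda>x. f x * deriv Q x) x0"
    unfolding PsiF_fun
    by (rule diff_formula[OF S _ _ x0]) (intro mult_smooth S sU f Q deriv1_smooth)+
  also have "\<dots> = 0"
    using prod_zero[OF S sU Q x0 zU] prod_zero[OF S f deriv1_smooth[OF Q] x0 zW] by simp
  finally show ?thesis .
qed



lemma final_bound:
  fixes e d c Nn Dd N :: real
  assumes Nn: "\<bar>Nn\<bar> \<le> d * N" and D: "c^2 * N < Dd" and N: "0 \<le> N" and e: "\<bar>e\<bar> < d" and c: "0 < c"
  shows "\<bar>e^2 * Nn / Dd\<bar> < d^3 / c^2"
proof -
  have d: "0 < d" using e by linarith
  have Dp: "0 < Dd" using D N c by (smt (verit) mult_nonneg_nonneg zero_le_power2)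
  have e2: "e^2 \<le> d^2" using power_mono[of "\<bar>e\<bar>" d 2] e by simp
  have "e^2 * \<bar>Nn\<bar> * c^2 \<le> e^2 * (d * N) * c^2"
    by (intro mult_right_mono mult_left_mono Nn) auto
  also have "\<dots> \<le> d^2 * (d * N) * c^2"
    by (intro mult_right_mono e2) (use d N in auto)
  also have "\<dots> = d^3 * (c^2 * N)" by (simp add: power2_eq_square power3_eq_cube)
  also have "\<dots> < d^3 * Dd" by (rule mult_strict_left_mono[OF D]) (use d in simp)
  finally have *: "e^2 * \<bar>Nn\<bar> * c^2 < d^3 * Dd" .
  have "\<bar>e^2 * Nn / Dd\<bar> = e^2 * \<bar>Nn\<bar> / Dd" using Dp by (simp add: abs_mult)
  also have "\<dots> < d^3 / c^2" using * Dp c by (simp add: divide_less_eq less_divide_eq mult.commute mult.left_commute)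
  finally show ?thesis .
qed

lemma sum_bound:
  fixes A d :: real
  assumes "\<forall>s<m. \<bar>Aij s\<bar> \<le> A" "\<forall>s<m. \<bar>e s\<bar> < d"
  shows "\<bar>\<Sum>s<m. Aij s * e s\<bar> \<le> real m * A * d"
proof -
  have "\<bar>\<Sum>s<m. Aij s * e s\<bar> \<le> (\<Sum>s<m. \<bar>Aij s\<bar> * \<bar>e s\<bar>)"
    by (metis (no_types, lifting) abs_mult sum.cong sum_abs)
  also have "\<dots> \<le> (\<Sum>s<m. A * d)"
    by (rule sum_mono, rule mult_mono) (use assms in \<open>auto simp: less_imp_le\<close>)
  finally show ?thesis by simp
qed

lemma den_bound:
  fixes al Bv K P F0 bs b2 e d c :: real
  assumes al: "0 \<le> al" and bs: "\<bar>bs\<bar> \<le> mm * B * d" and b2: "\<bar>b2\<bar> \<le> K" and F0: "P^2 \<le> F0^2"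
    and e: "\<bar>e\<bar> < d" and dc: "d \<le> c" and B: "0 \<le> B" and mm: "0 \<le> mm"
  shows "(al + 1)^2 * al * P^2 - c * (al + 1) * (al * B * mm + K)
      \<le> al * (al + 1) * ((al + 1) * F0^2 + bs) + (al + 1) * b2 * e"
proof -
  have K: "0 \<le> K" using b2 by linarith
  have d: "0 \<le> d" using e by linarith
  have 1: "(al + 1) * P^2 - mm * B * c \<le> (al + 1) * F0^2 + bs"
  proof -
    have "mm * B * d \<le> mm * B * c" by (intro mult_left_mono dc) (use B mm in auto)
    moreover have "(al + 1) * P^2 \<le> (al + 1) * F0^2" by (intro mult_left_mono F0) (use al in auto)
    ultimately show ?thesis using bs by linarith
  qed
  have 2: "al * (al + 1) * ((al + 1) * P^2 - mm * B * c) \<le> al * (al + 1) * ((al + 1) * F0^2 + bs)"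
    by (intro mult_left_mono 1) (use al in auto)
  have 3: "- ((al + 1) * K * c) \<le> (al + 1) * b2 * e"
  proof -
    have "\<bar>b2 * e\<bar> \<le> K * c" unfolding abs_mult
      by (intro mult_mono b2) (use e dc K in auto)
    then have "\<bar>(al + 1) * (b2 * e)\<bar> \<le> (al + 1) * (K * c)" using al
      by (simp add: abs_mult mult_left_mono)
    then show ?thesis by (simp add: mult.assoc)
  qed
  have "(al + 1)^2 * al * P^2 - c * (al + 1) * (al * B * mm + K)
      = al * (al + 1) * ((al + 1) * P^2 - mm * B * c) - ((al + 1) * K * c)"
    by (simp add: algebra_simps power2_eq_square)
  then show ?thesis using 2 3 by linarith
qed



lemma taylor_last:
  fixes g :: "real \<Rightarrow> real"
  assumes g: "smooth_on g S" and I: "{min x0 x..max x0 x} \<subseteq> S" and ne: "x \<noteq> x0" and N: "0 < N"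
    and z: "\<And>j. j < N - 1 \<Longrightarrow> (deriv ^^ j) g x0 = 0"
  shows "\<exists>t\<in>{min x0 x..max x0 x}. g x = (deriv ^^ (N - 1)) g x0 / fact (N - 1) * (x - x0) ^ (N - 1)
           + (deriv ^^ N) g t / fact N * (x - x0) ^ N"
proof -
  have D: "\<forall>m t. m < N \<and> min x0 x \<le> t \<and> t \<le> max x0 x \<longrightarrow> ((deriv ^^ m) g has_real_derivative (deriv ^^ Suc m) g t) (at t)"
    using smooth_onD[OF g] I by auto
  obtain t where t: "(if x < x0 then x < t \<and> t < x0 else x0 < t \<and> t < x)"
    and eq: "g x = (\<Sum>m<N. (deriv ^^ m) g x0 / fact m * (x - x0)^m) + (deriv ^^ N) g t / fact N * (x - x0)^N"
    using Taylor[of N "\<lambda>m. (deriv ^^ m) g" g "min x0 x" "max x0 x" x0 x] N ne D by auto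
  obtain N' where N': "N = Suc N'" using N by (metis gr0_implies_Suc)
  have "(\<Sum>m<N. (deriv ^^ m) g x0 / fact m * (x - x0)^m) = (deriv ^^ (N - 1)) g x0 / fact (N - 1) * (x - x0) ^ (N - 1)"
    unfolding N' sum.lessThan_Suc using z N' by (simp add: sum.neutral)
  moreover have "t \<in> {min x0 x..max x0 x}" using t by (auto split: if_splits)
  ultimately show ?thesis using eq by auto
qed

lemma ratio_alg:
  fixes e a1 a2 b1 b2 :: real
  assumes e: "e \<noteq> 0"
  shows "(a1 / fact (Suc p + 1) * e^(Suc p + 1) + a2 / fact (Suc p + 2) * e^(Suc p + 2)) /
         (b1 / fact (Suc p - 1) * e^(Suc p - 1) + b2 / fact (Suc p) * e^(Suc p))
       = e^2 * (a1 + a2 * e / (real (Suc p) + 2)) / (real (Suc p) * (real (Suc p) + 1) * b1 + (real (Suc p) + 1) * b2 * e)"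
proof -
  define F where "F = (fact p :: real)"
  define r1 where "r1 = real p + 1"
  define r2 where "r2 = real p + 2"
  define r3 where "r3 = real p + 3"
  have F0: "F \<noteq> 0" by (simp add: F_def)
  have n1: "r1 \<noteq> 0" "r2 \<noteq> 0" "r3 \<noteq> 0" unfolding r1_def r2_def r3_def by linarith+
  have f1: "(fact (Suc p) :: real) = r1 * F" by (simp add: F_def r1_def fact_Suc)
  have f2: "(fact (Suc p + 1) :: real) = r2 * r1 * F" by (simp add: F_def r1_def r2_def fact_Suc algebra_simps)
  have f3: "(fact (Suc p + 2) :: real) = r3 * r2 * r1 * F"
    by (simp add: F_def r1_def r2_def r3_def fact_Suc algebra_simps numeral_2_eq_2 numeral_3_eq_3)
  have f0: "(fact (Suc p - 1) :: real) = F" by (simp add: F_def)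
  have s1: "real (Suc p) = r1" "r1 + 1 = r2" "r1 + 2 = r3"
    by (simp_all add: r1_def r2_def r3_def)
  define k where "k = e^p / (r2 * r1 * F)"
  have k0: "k \<noteq> 0" using e F0 n1 by (simp add: k_def)
  have X: "a1 / fact (Suc p + 1) * e^(Suc p + 1) + a2 / fact (Suc p + 2) * e^(Suc p + 2)
      = k * (e^2 * (a1 + a2 * e / (real (Suc p) + 2)))"
    unfolding f2 f3 k_def s1 using F0 n1
    by (simp add: field_simps power_add power2_eq_square)
  have Y: "b1 / fact (Suc p - 1) * e^(Suc p - 1) + b2 / fact (Suc p) * e^(Suc p)
      = k * (real (Suc p) * (real (Suc p) + 1) * b1 + (real (Suc p) + 1) * b2 * e)"
    unfolding f0 f1 k_def s1 using F0 n1
    by (simp add: field_simps power_add)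
  show ?thesis unfolding X Y using k0 by (rule mult_divide_mult_cancel_left)
qed

theorem mainTheorem1:
  fixes a b :: real and phi :: "nat \<Rightarrow> real \<Rightarrow> real" and n m :: nat
    and al :: "nat \<Rightarrow> nat" and xs xk xk1 :: "nat \<Rightarrow> real"
    and f :: "real \<Rightarrow> real" and Q :: "nat \<Rightarrow> real \<Rightarrow> real"
    and k :: nat and Aij Bij :: "nat \<Rightarrow> nat \<Rightarrow> real"
    and A B M K P c q :: real
  assumes ab: "a < b"
    and smooth: "\<forall>j\<le>n. smooth_on (phi j) {a<..<b}"
    and cheb: "chebyshev_system phi n {a<..<b}"
    and al_pos: "\<forall>j<m. 0 < al j"
    and al_sum: "(\<Sum>j<m. al j) = n"
    and xs_in: "\<forall>i<m. xs i \<in> {a<..<b}"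
    and xs_dist: "inj_on xs {..<m}"
    and f_def: "f = (\<lambda>x. Dfun phi n m al x xs)"
    and xk_in: "\<forall>i<m. xk i \<in> {a<..<b}"
    and Q_def: "\<forall>i. Q i = (deriv ^^ al i) (\<lambda>x. Dfun phi n m al x xk)"
    and wd_Q: "\<forall>i<m. Q i (xk i) \<noteq> 0"
    and wd_br: "\<forall>i<m. deriv f (xk i) - f (xk i) * deriv (Q i) (xk i) / ((real (al i) + 1) * Q i (xk i)) \<noteq> 0"
    and iter: "\<forall>i<m. xk1 i = xk i - real (al i) * f (xk i) /
                 (deriv f (xk i) - f (xk i) * deriv (Q i) (xk i) / ((real (al i) + 1) * Q i (xk i)))"
    and Phi_exp: "\<forall>i<m. (deriv ^^ (al i + 1)) (PhiF f (Q i) (al i) (xs i)) (xs i)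
                    = (\<Sum>s<m. Aij i s * (xk s - xs s))"
    and Psi_exp: "\<forall>i<m. (deriv ^^ (al i - 1)) (PsiF f (Q i) (al i)) (xs i)
                    = (real (al i) + 1) * ((deriv ^^ al i) f (xs i))^2 + (\<Sum>s<m. Bij i s * (xk s - xs s))"
    and A_bd: "\<forall>i<m. \<forall>s<m. \<bar>Aij i s\<bar> \<le> A"
    and B_bd: "\<forall>i<m. \<forall>s<m. \<bar>Bij i s\<bar> \<le> B"
    and M_bd: "\<forall>i<m. \<forall>x\<in>{min (xs i) (xk i)..max (xs i) (xk i)}.
                 \<bar>(deriv ^^ (al i + 2)) (PhiF f (Q i) (al i) (xs i)) x\<bar> \<le> M"
    and K_bd: "\<forall>i<m. \<forall>x\<in>{min (xs i) (xk i)..max (xs i) (xk i)}.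
                 \<bar>(deriv ^^ al i) (PsiF f (Q i) (al i)) x\<bar> \<le> K"
    and P_pos: "0 < P"
    and P_bd: "\<forall>i<m. P \<le> \<bar>(deriv ^^ al i) f (xs i)\<bar>"
    and c_pos: "0 < c" and q_pos: "0 < q" and q_lt: "q < 1"
    and cond: "\<forall>i<m. c^2 * (real m * A + M / (real (al i) + 2))
                 < (real (al i) + 1)^2 * real (al i) * P^2
                   - c * (real (al i) + 1) * (real (al i) * B * real m + K)"
    and close: "\<forall>i<m. \<bar>xk i - xs i\<bar> < c * q ^ (3 ^ k)"
  shows "\<forall>i<m. \<bar>xk1 i - xs i\<bar> < c * q ^ (3 ^ (k + 1))"
proof -
  define S where "S = {a<..<b}"
  have S: "open S" by (simp add: S_def)
  have sphi: "\<forall>j\<le>n. smooth_on (phi j) S" using smooth by (simp add: S_def)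
  have sf: "smooth_on f S" unfolding f_def by (rule Dfun_smooth[OF S sphi])
  have sD: "smooth_on (\<lambda>x. Dfun phi n m al x xk) S" by (rule Dfun_smooth[OF S sphi])
  show ?thesis
  proof (intro allI impI)
    fix i assume i: "i < m"
    obtain p where p: "al i = Suc p" using al_pos i by (metis gr0_implies_Suc)
    define e where "e = xk i - xs i"
    define d where "d = c * q ^ (3 ^ k)"
    have sQ: "smooth_on (Q i) S" using Q_def deriv_smooth[OF sD] by simp
    have xsS: "xs i \<in> S" and xkS: "xk i \<in> S" using xs_in xk_in i by (auto simp: S_def)
    have I: "{min (xs i) (xk i)..max (xs i) (xk i)} \<subseteq> S" using xsS xkS by (auto simp: S_def)
    have zf: "\<And>l. l < al i \<Longrightarrow> (deriv ^^ l) f (xs i) = 0"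
      unfolding f_def by (rule Dfun_zero[where ys=xs and i=i and S=S and phi=phi and m=m and al=al and n=n, OF S sphi xsS i _ al_sum])
    have sPhi: "smooth_on (PhiF f (Q i) (al i) (xs i)) S" by (rule Phi_smooth[OF S sf sQ])
    have sPsi: "smooth_on (PsiF f (Q i) (al i)) S" by (rule Psi_smooth[OF S sf sQ])
    define F where "F = f (xk i)"
    define F1 where "F1 = deriv f (xk i)"
    define G where "G = Q i (xk i)"
    define G1 where "G1 = deriv (Q i) (xk i)"
    define r where "r = real (al i) + 1"
    define \<beta> where "\<beta> = F1 - F * G1 / (r * G)"
    have G0: "G \<noteq> 0" using wd_Q i by (simp add: G_def)
    have br: "\<beta> \<noteq> 0" using wd_br i by (simp add: \<beta>_def F_def F1_def G_def G1_def r_def)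
    have a1: "r \<noteq> 0" unfolding r_def by linarith
    have P1: "PsiF f (Q i) (al i) (xk i) = r * F1 * G - F * G1"
      by (simp add: PsiF_def F_def F1_def G_def G1_def r_def)
    have P2: "r * G * \<beta> = r * F1 * G - F * G1"
      unfolding \<beta>_def using G0 a1 by (simp add: field_simps)
    have PsiE: "PsiF f (Q i) (al i) (xk i) = r * G * \<beta>" using P1 P2 by simp
    have Psi0: "PsiF f (Q i) (al i) (xk i) \<noteq> 0" using PsiE G0 br a1 by simp
    have PhiE: "PhiF f (Q i) (al i) (xs i) (xk i) = e * PsiF f (Q i) (al i) (xk i) - real (al i) * r * F * G"
      by (simp add: PhiF_def PsiF_def e_def F_def F1_def G_def G1_def r_def algebra_simps)
    have step: "xk1 i - xs i = PhiF f (Q i) (al i) (xs i) (xk i) / PsiF f (Q i) (al i) (xk i)"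
    proof -
      have "xk1 i - xs i = e - real (al i) * F / \<beta>"
        using iter i by (simp add: e_def F_def F1_def G_def G1_def \<beta>_def r_def)
      also have "\<dots> = PhiF f (Q i) (al i) (xs i) (xk i) / PsiF f (Q i) (al i) (xk i)"
        unfolding PhiE PsiE using G0 br a1 by (simp add: field_simps)
      finally show ?thesis .
    qed
    have dpos: "0 < d" unfolding d_def using c_pos q_pos by simp
    have dc: "d \<le> c" unfolding d_def using c_pos q_pos q_lt
      by (simp add: mult_le_cancel_left1 power_le_one)
    have ed: "\<bar>e\<bar> < d" using close i by (simp add: e_def d_def)
    have target: "d^3 / c^2 = c * q ^ (3 ^ (k + 1))"
    proof -
      have "q ^ (3 ^ (k + 1)) = (q ^ (3 ^ k)) ^ 3" by (simp add: power_mult[symmetric] mult.commute)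
      then show ?thesis using c_pos unfolding d_def by (simp add: power_mult_distrib power2_eq_square power3_eq_cube)
    qed
    show "\<bar>xk1 i - xs i\<bar> < c * q ^ (3 ^ (k + 1))"
    proof (cases "e = 0")
      case True
      then have "xk i = xs i" by (simp add: e_def)
      then have "PhiF f (Q i) (al i) (xs i) (xk i) = 0"
        using Phi_zero[where j=0, OF S sf sQ xsS zf] by simp
      then show ?thesis unfolding step using c_pos q_pos by simp
    next
      case False
      have ne: "xk i \<noteq> xs i" using False by (simp add: e_def)
      have I': "{min (xs i) (xk i)..max (xs i) (xk i)} \<subseteq> S" by (rule I)
      obtain t1 where t1: "t1 \<in> {min (xs i) (xk i)..max (xs i) (xk i)}"
        and T1: "PhiF f (Q i) (al i) (xs i) (xk i) =
          (deriv ^^ (al i + 2 - 1)) (PhiF f (Q i) (al i) (xs i)) (xs i) / fact (al i + 2 - 1) * e ^ (al i + 2 - 1)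
          + (deriv ^^ (al i + 2)) (PhiF f (Q i) (al i) (xs i)) t1 / fact (al i + 2) * e ^ (al i + 2)"
        using taylor_last[OF sPhi I ne, of "al i + 2"] Phi_zero[OF S sf sQ xsS zf] unfolding e_def by auto
      obtain t2 where t2: "t2 \<in> {min (xs i) (xk i)..max (xs i) (xk i)}"
        and T2: "PsiF f (Q i) (al i) (xk i) =
          (deriv ^^ (al i - 1)) (PsiF f (Q i) (al i)) (xs i) / fact (al i - 1) * e ^ (al i - 1)
          + (deriv ^^ (al i)) (PsiF f (Q i) (al i)) t2 / fact (al i) * e ^ (al i)"
        using taylor_last[OF sPsi I ne, of "al i"] Psi_zero[OF S sf sQ xsS zf] p unfolding e_def by auto
      define a1 where "a1 = (\<Sum>s<m. Aij i s * (xk s - xs s))"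
      define a2 where "a2 = (deriv ^^ (al i + 2)) (PhiF f (Q i) (al i) (xs i)) t1"
      define F0 where "F0 = (deriv ^^ al i) f (xs i)"
      define bs where "bs = (\<Sum>s<m. Bij i s * (xk s - xs s))"
      define b2 where "b2 = (deriv ^^ (al i)) (PsiF f (Q i) (al i)) t2"
      define Nn where "Nn = a1 + a2 * e / (real (al i) + 2)"
      define Dd where "Dd = real (al i) * (real (al i) + 1) * ((real (al i) + 1) * F0^2 + bs) + (real (al i) + 1) * b2 * e"
      define NN where "NN = real m * A + M / (real (al i) + 2)"
      have n1: "al i + 2 - 1 = al i + 1" by simp
      have E1: "(deriv ^^ (al i + 2 - 1)) (PhiF f (Q i) (al i) (xs i)) (xs i) = a1"
        unfolding n1 a1_def using Phi_exp i by blast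
      have E2: "(deriv ^^ (al i - 1)) (PsiF f (Q i) (al i)) (xs i) = (real (al i) + 1) * F0^2 + bs"
        unfolding F0_def bs_def using Psi_exp i by blast
      have T1': "PhiF f (Q i) (al i) (xs i) (xk i) = a1 / fact (al i + 1) * e ^ (al i + 1) + a2 / fact (al i + 2) * e ^ (al i + 2)"
        using T1 unfolding n1 E1[unfolded n1] a2_def[symmetric] .
      have T2': "PsiF f (Q i) (al i) (xk i) = ((real (al i) + 1) * F0^2 + bs) / fact (al i - 1) * e ^ (al i - 1) + b2 / fact (al i) * e ^ (al i)"
        using T2 unfolding E2 b2_def[symmetric] .
      have ratio: "xk1 i - xs i = e^2 * Nn / Dd"
        unfolding step T1' T2' unfolding Nn_def Dd_def p by (rule ratio_alg[OF False])
      have A0: "0 \<le> A" using A_bd i by (meson abs_ge_zero order_trans)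
      have B0: "0 \<le> B" using B_bd i by (meson abs_ge_zero order_trans)
      have a2M: "\<bar>a2\<bar> \<le> M" using M_bd i t1 by (simp add: a2_def)
      have M0: "0 \<le> M" using a2M by linarith
      have b2K: "\<bar>b2\<bar> \<le> K" using K_bd i t2 by (simp add: b2_def)
      have eall: "\<forall>s<m. \<bar>xk s - xs s\<bar> < d" using close by (simp add: d_def)
      have a1b: "\<bar>a1\<bar> \<le> real m * A * d" unfolding a1_def
        by (rule sum_bound) (use A_bd i eall in auto)
      have bsb: "\<bar>bs\<bar> \<le> real m * B * d" unfolding bs_def
        by (rule sum_bound) (use B_bd i eall in auto)
      have al2: "0 < real (al i) + 2" by simp
      have "\<bar>a2 * e\<bar> \<le> M * d" unfolding abs_mult
        by (intro mult_mono a2M) (use ed M0 in auto)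
      then have "\<bar>a2 * e / (real (al i) + 2)\<bar> \<le> M * d / (real (al i) + 2)"
        using al2 by (simp add: divide_right_mono)
      then have X: "\<bar>a2 * e / (real (al i) + 2)\<bar> \<le> M * d / (real (al i) + 2)"
        by simp
      have Y: "\<bar>Nn\<bar> \<le> \<bar>a1\<bar> + \<bar>a2 * e / (real (al i) + 2)\<bar>"
        unfolding Nn_def by (rule abs_triangle_ineq)
      have Z: "d * NN = real m * A * d + M * d / (real (al i) + 2)"
        unfolding NN_def by (simp add: algebra_simps)
      have Nnb: "\<bar>Nn\<bar> \<le> d * NN" using X Y Z a1b by linarith
      have NN0: "0 \<le> NN" unfolding NN_def using A0 M0 by simp
      have F0P: "P^2 \<le> F0^2"
        using power_mono[of P "\<bar>F0\<bar>" 2] P_bd i P_pos by (simp add: F0_def)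
      have Ddb: "(real (al i) + 1)^2 * real (al i) * P^2 - c * (real (al i) + 1) * (real (al i) * B * real m + K) \<le> Dd"
        unfolding Dd_def
        by (rule den_bound[OF _ _ b2K F0P ed dc B0]) (use bsb in \<open>auto simp: mult.commute mult.left_commute\<close>)
      have cD: "c^2 * NN < Dd" using cond i Ddb unfolding NN_def by fastforce
      have "\<bar>e^2 * Nn / Dd\<bar> < d^3 / c^2" by (rule final_bound[OF Nnb cD NN0 ed c_pos])
      then show ?thesis unfolding ratio target .
    qed
  qed
qed


end
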